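(* Let $\{G_k\}_{k\ge0}$ be a nonnegative real sequence with $G_0=G_1\ge0$ and $G_{k+1}\le\phi_1G_k+\phi_2G_{k-1}$ for all $k\ge1$, where $\phi_1,\phi_2\ge0$ and $\phi_1+\phi_2<1$. Let $\phi=\frac{-\phi_1+\sqrt{\phi_1^2+4\phi_2}}{2}$ (the largest root of $t^2+\phi_1t-\phi_2=0$) and $\rho=\phi+\phi_1$. Then: 1. $G_{k+1}\le(1+\phi)(\phi+\phi_1)^kG_0$ for all $k\ge1$. 2. With $R_1=\frac{1+\phi}{\phi+\rho}$, $R_2=\frac{1-\rho}{\phi+\rho}$, $R_3=\frac{\rho+\phi_2}{\phi+\rho}$, $R_4=\frac{\phi-\phi_2}{\phi+\rho}$: for $k\ge1$ even, $G_{k+1}\le(R_1\rho^{k+1}+R_2\phi^{k+1})G_0$ and $G_k\le(R_1\rho^k-R_2\phi^k)G_0$; for $k\ge1$ odd, $G_{k+1}\le(R_3\rho^k-R_4\phi^k)G_0$ and $G_k\le(R_3\rho^{k-1}+R_4\phi^{k-1})G_0$. Here $0\le\phi<1$ and $0<\rho<1$. *)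

theory Defs
  imports Complex_Main
begin

end

theory Submission
  imports Defs
begin

theorem theorem1:
  fixes G :: "nat \<Rightarrow> real" and \<phi>1 \<phi>2 \<phi> \<rho> R1 R2 R3 R4 :: real
  assumes nonneg: "\<And>k. G k \<ge> 0"
    and G01: "G 0 = G 1" and G0: "G 0 \<ge> 0"
    and rec: "\<And>k. k \<ge> 1 \<Longrightarrow> G (k + 1) \<le> \<phi>1 * G k + \<phi>2 * G (k - 1)"
    and p1: "\<phi>1 \<ge> 0" and p2: "\<phi>2 \<ge> 0" and psum: "\<phi>1 + \<phi>2 < 1"
    and nondeg: "\<phi>1 + \<phi>2 > 0"
  defines "\<phi> \<equiv> (- \<phi>1 + sqrt (\<phi>1\<^sup>2 + 4 * \<phi>2)) / 2"
    and "\<rho> \<equiv> \<phi> + \<phi>1"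
    and "R1 \<equiv> (1 + \<phi>) / (\<phi> + \<rho>)"
    and "R2 \<equiv> (1 - \<rho>) / (\<phi> + \<rho>)"
    and "R3 \<equiv> (\<rho> + \<phi>2) / (\<phi> + \<rho>)"
    and "R4 \<equiv> (\<phi> - \<phi>2) / (\<phi> + \<rho>)"
  shows "(\<forall>k\<ge>1. G (k + 1) \<le> (1 + \<phi>) * (\<phi> + \<phi>1) ^ k * G 0)
    \<and> (\<forall>k\<ge>1. even k \<longrightarrow>
          G (k + 1) \<le> (R1 * \<rho> ^ (k + 1) + R2 * \<phi> ^ (k + 1)) * G 0
        \<and> G k \<le> (R1 * \<rho> ^ k - R2 * \<phi> ^ k) * G 0)
    \<and> (\<forall>k\<ge>1. odd k \<longrightarrow>
          G (k + 1) \<le> (R3 * \<rho> ^ k - R4 * \<phi> ^ k) * G 0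
        \<and> G k \<le> (R3 * \<rho> ^ (k - 1) + R4 * \<phi> ^ (k - 1)) * G 0)
    \<and> 0 \<le> \<phi> \<and> \<phi> < 1 \<and> 0 < \<rho> \<and> \<rho> < 1"
proof -
  have sq: "(sqrt (\<phi>1\<^sup>2 + 4 * \<phi>2))\<^sup>2 = \<phi>1\<^sup>2 + 4 * \<phi>2"
    using p1 p2 by simp
  have sqge: "sqrt (\<phi>1\<^sup>2 + 4 * \<phi>2) \<ge> \<phi>1"
    using p1 p2 by (simp add: real_le_rsqrt)
  have key: "\<phi>\<^sup>2 + \<phi>1 * \<phi> = \<phi>2"
    unfolding \<phi>_def using sq by (simp add: power2_eq_square field_simps)
  have phi0: "0 \<le> \<phi>" unfolding \<phi>_def using sqge by simp
  have phi1: "\<phi> < 1"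
  proof (rule ccontr)
    assume "\<not> \<phi> < 1"
    hence "\<phi>\<^sup>2 \<ge> 1" "\<phi>1 * \<phi> \<ge> \<phi>1" using p1
      by (auto simp: power2_eq_square mult_le_cancel_left1 intro: order_trans[OF _ mult_mono[of 1 \<phi> 1 \<phi>]])
    thus False using key psum p1 by linarith
  qed
  have rhopos: "0 < \<rho>"
  proof (cases "\<phi>1 > 0")
    case True thus ?thesis using phi0 \<rho>_def by simp
  next
    case False
    hence "\<phi>1 = 0" "\<phi>2 > 0" using p1 nondeg by auto
    hence "\<phi> \<noteq> 0" using key by auto
    thus ?thesis using phi0 \<rho>_def \<open>\<phi>1 = 0\<close> by simp
  qed
  have rhokey: "\<rho> * \<phi> = \<phi>2" using key \<rho>_def by (simp add: power2_eq_square algebra_simps)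
  have rhosq: "\<rho>\<^sup>2 = \<phi>1 * \<rho> + \<phi>2" using key \<rho>_def by (simp add: power2_eq_square algebra_simps)
  have rho1: "\<rho> < 1"
  proof (rule ccontr)
    assume "\<not> \<rho> < 1"
    hence "\<rho> * \<rho> \<ge> \<rho>" "\<phi>2 * \<rho> \<ge> \<phi>2" using p2 by (auto simp: mult_le_cancel_left1)
    hence "\<rho> * \<rho> \<le> (\<phi>1 + \<phi>2) * \<rho>" using rhosq by (simp add: power2_eq_square algebra_simps)
    hence "\<rho> \<le> \<phi>1 + \<phi>2" using rhopos by simp
    thus False using psum \<open>\<not> \<rho> < 1\<close> by linarith
  qed
  have den: "\<phi> + \<rho> > 0" using phi0 rhopos by simp
  define x where "x k = R1 * \<rho> ^ k - R2 * (- \<phi>) ^ k" for k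
  have x0: "x 0 = 1"
  proof -
    have "x 0 = R1 - R2" by (simp add: x_def)
    also have "\<dots> = ((1 + \<phi>) - (1 - \<rho>)) / (\<phi> + \<rho>)"
      unfolding R1_def R2_def by (rule diff_divide_distrib[symmetric])
    also have "(1 + \<phi>) - (1 - \<rho>) = \<phi> + \<rho>" by simp
    finally show ?thesis using den by (metis divide_self less_irrefl)
  qed
  have x1: "x 1 = 1"
  proof -
    have "x 1 = R1 * \<rho> + R2 * \<phi>" by (simp add: x_def)
    also have "\<dots> = ((1 + \<phi>) * \<rho>) / (\<phi> + \<rho>) + ((1 - \<rho>) * \<phi>) / (\<phi> + \<rho>)"
      unfolding R1_def R2_def by simp
    also have "\<dots> = ((1 + \<phi>) * \<rho> + (1 - \<rho>) * \<phi>) / (\<phi> + \<rho>)"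
      by (rule add_divide_distrib[symmetric])
    also have "(1 + \<phi>) * \<rho> + (1 - \<rho>) * \<phi> = \<phi> + \<rho>" by (simp add: algebra_simps)
    finally show ?thesis using den by (metis divide_self less_irrefl)
  qed
  have xrec: "x (Suc (Suc k)) = \<phi>1 * x (Suc k) + \<phi>2 * x k" for k
  proof -
    have a: "\<rho> ^ Suc (Suc k) = \<phi>1 * \<rho> ^ Suc k + \<phi>2 * \<rho> ^ k"
    proof -
      have "\<rho>*\<rho> * \<rho> ^ k = (\<phi>1 * \<rho> + \<phi>2) * \<rho> ^ k" using rhosq by (simp add: power2_eq_square)
      thus ?thesis by (simp add: algebra_simps)
    qed
    have b: "(-\<phi>) ^ Suc (Suc k) = \<phi>1 * (-\<phi>) ^ Suc k + \<phi>2 * (-\<phi>) ^ k"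
    proof -
      have "(-\<phi>)*(-\<phi>) = \<phi>1 * (-\<phi>) + \<phi>2" using key by (simp add: power2_eq_square algebra_simps)
      hence "(-\<phi>)*(-\<phi>) * (-\<phi>) ^ k = (\<phi>1 * (-\<phi>) + \<phi>2) * (-\<phi>) ^ k" by simp
      thus ?thesis by (simp add: algebra_simps)
    qed
    show ?thesis unfolding x_def a b by (simp add: algebra_simps)
  qed
  have Gx: "G k \<le> x k * G 0 \<and> G (Suc k) \<le> x (Suc k) * G 0" for k
  proof (induction k)
    case 0 thus ?case using x0 x1 G01 by simp
  next
    case (Suc k)
    have "G (Suc (Suc k)) \<le> \<phi>1 * G (Suc k) + \<phi>2 * G k"
      using rec[of "Suc k"] by simp
    also have "\<dots> \<le> \<phi>1 * (x (Suc k) * G 0) + \<phi>2 * (x k * G 0)"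
      using Suc p1 p2 by (intro add_mono mult_left_mono) auto
    also have "\<dots> = x (Suc (Suc k)) * G 0" using xrec by (simp add: algebra_simps)
    finally show ?case using Suc by simp
  qed
  have H: "G (Suc (Suc k)) + \<phi> * G (Suc k) \<le> \<rho> ^ Suc k * (1 + \<phi>) * G 0" for k
  proof (induction k)
    case 0
    have "G (Suc (Suc 0)) \<le> \<phi>1 * G 1 + \<phi>2 * G 0" using rec[of 1] by simp
    thus ?case using G01 rhokey \<rho>_def by (simp add: algebra_simps)
  next
    case (Suc k)
    have "G (Suc (Suc (Suc k))) \<le> \<phi>1 * G (Suc (Suc k)) + \<phi>2 * G (Suc k)"
      using rec[of "Suc (Suc k)"] by simp
    hence "G (Suc (Suc (Suc k))) + \<phi> * G (Suc (Suc k)) \<le> \<rho> * (G (Suc (Suc k)) + \<phi> * G (Suc k))"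
    proof -
      have "\<rho> * (G (Suc (Suc k)) + \<phi> * G (Suc k)) = (\<phi>1 + \<phi>) * G (Suc (Suc k)) + (\<rho> * \<phi>) * G (Suc k)"
        using \<rho>_def by (simp add: algebra_simps)
      also have "\<dots> = \<phi>1 * G (Suc (Suc k)) + \<phi>2 * G (Suc k) + \<phi> * G (Suc (Suc k))"
        using rhokey by (simp add: algebra_simps)
      finally show ?thesis using \<open>G (Suc (Suc (Suc k))) \<le> _\<close> by linarith
    qed
    also have "\<dots> \<le> \<rho> * (\<rho> ^ Suc k * (1 + \<phi>) * G 0)"
      using Suc rhopos by (intro mult_left_mono) auto
    finally show ?case by (simp add: algebra_simps)
  qed
  have part1: "\<forall>k\<ge>1. G (k + 1) \<le> (1 + \<phi>) * (\<phi> + \<phi>1) ^ k * G 0"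
  proof (intro allI impI)
    fix k :: nat assume "k \<ge> 1"
    then obtain m where m: "k = Suc m" by (cases k) auto
    have "\<phi> * G (Suc m) \<ge> 0" using phi0 nonneg by simp
    thus "G (k + 1) \<le> (1 + \<phi>) * (\<phi> + \<phi>1) ^ k * G 0"
      using H[of m] m \<rho>_def by (simp add: algebra_simps)
  qed
  have xk: "G k \<le> x k * G 0" for k using Gx by blast
  have part2: "\<forall>k\<ge>1. even k \<longrightarrow>
          G (k + 1) \<le> (R1 * \<rho> ^ (k + 1) + R2 * \<phi> ^ (k + 1)) * G 0
        \<and> G k \<le> (R1 * \<rho> ^ k - R2 * \<phi> ^ k) * G 0"
  proof (intro allI impI)
    fix k :: nat assume "k \<ge> 1" "even k"
    have "x (k+1) = R1 * \<rho> ^ (k + 1) + R2 * \<phi> ^ (k + 1)" "x k = R1 * \<rho> ^ k - R2 * \<phi> ^ k"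
      unfolding x_def using \<open>even k\<close> by (auto simp: power_minus_odd power_minus_even)
    thus "G (k + 1) \<le> (R1 * \<rho> ^ (k + 1) + R2 * \<phi> ^ (k + 1)) * G 0
        \<and> G k \<le> (R1 * \<rho> ^ k - R2 * \<phi> ^ k) * G 0" using xk[of k] xk[of "k+1"] by simp
  qed
  have part3: "\<forall>k\<ge>1. odd k \<longrightarrow>
          G (k + 1) \<le> (R3 * \<rho> ^ k - R4 * \<phi> ^ k) * G 0
        \<and> G k \<le> (R3 * \<rho> ^ (k - 1) + R4 * \<phi> ^ (k - 1)) * G 0"
  proof (intro allI impI)
    fix k :: nat assume "k \<ge> 1" "odd k"
    then obtain m where m: "k = Suc m" by (cases k) auto
    have e: "even m" using \<open>odd k\<close> m by simp
    have r3: "R3 = R1 * \<rho>" unfolding R3_def R1_def using rhokey by (simp add: algebra_simps)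
    have r4: "R4 = R2 * \<phi>" unfolding R4_def R2_def using rhokey \<rho>_def by (simp add: algebra_simps)
    have "x (k+1) = R3 * \<rho> ^ k - R4 * \<phi> ^ k" "x k = R3 * \<rho> ^ (k - 1) + R4 * \<phi> ^ (k - 1)"
      unfolding x_def r3 r4 m using e by (auto simp: power_minus_odd power_minus_even)
    thus "G (k + 1) \<le> (R3 * \<rho> ^ k - R4 * \<phi> ^ k) * G 0
        \<and> G k \<le> (R3 * \<rho> ^ (k - 1) + R4 * \<phi> ^ (k - 1)) * G 0" using xk[of k] xk[of "k+1"] by simp
  qed
  show ?thesis using part1 part2 part3 phi0 phi1 rhopos rho1 by blast
qed

end
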